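(* Let $\mathfrak n$ be a 2-step nilpotent real Lie algebra with center $\mathfrak z$, and let $\omega$ be a closed 2-form on $\mathfrak n$ with $\ker(\omega)\cap\mathfrak z=\{0\}$, where $\ker(\omega)=\{W\in\mathfrak n:\omega(W,V)=0\ \forall V\in\mathfrak n\}$. Then $\ker(\omega)$ is an abelian subalgebra of $\mathfrak n$. As a consequence: if $\langle\cdot,\cdot\rangle$ is an inner product on $\mathfrak n$, $\mathfrak v=\mathfrak z^\perp$, and $F:\mathfrak n\to\mathfrak n$ is a skew-symmetric map with $F(\mathfrak v)\subseteq\mathfrak z$, $F(\mathfrak z)\subseteq\mathfrak v$, such that $\omega(X,Y)=\langle F(X),Y\rangle$ is closed and $F(\mathfrak v)=\mathfrak z$, then $\ker(F|_{\mathfrak v})$ is an abelian subalgebra of $\mathfrak n$.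
   Context: A real Lie algebra is 2-step nilpotent if $[[U,V],W]=0$ for all $U,V,W$. A 2-form $\omega$ on $\mathfrak n$ is closed iff $\omega([U,V],W)+\omega([V,W],U)+\omega([W,U],V)=0$ for all $U,V,W\in\mathfrak n$. *)

theory Defs
  imports "HOL-Analysis.Analysis"
begin

definition lie_algebra :: "('a::real_vector \<Rightarrow> 'a \<Rightarrow> 'a) \<Rightarrow> bool" where
  "lie_algebra br \<longleftrightarrow> bilinear br \<and> (\<forall>x. br x x = 0) \<and>
     (\<forall>x y z. br x (br y z) + br y (br z x) + br z (br x y) = 0)"

definition two_step_nilpotent :: "('a::real_vector \<Rightarrow> 'a \<Rightarrow> 'a) \<Rightarrow> bool" where
  "two_step_nilpotent br \<longleftrightarrow> lie_algebra br \<and> (\<forall>U V W. br (br U V) W = 0)"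

definition lie_center :: "('a::real_vector \<Rightarrow> 'a \<Rightarrow> 'a) \<Rightarrow> 'a set" where
  "lie_center br = {Z. \<forall>V. br Z V = 0}"

definition two_form :: "('a::real_vector \<Rightarrow> 'a \<Rightarrow> real) \<Rightarrow> bool" where
  "two_form \<omega> \<longleftrightarrow> bilinear \<omega> \<and> (\<forall>x. \<omega> x x = 0)"

definition closed_form :: "('a::real_vector \<Rightarrow> 'a \<Rightarrow> 'a) \<Rightarrow> ('a \<Rightarrow> 'a \<Rightarrow> real) \<Rightarrow> bool" where
  "closed_form br \<omega> \<longleftrightarrow>
     (\<forall>U V W. \<omega> (br U V) W + \<omega> (br V W) U + \<omega> (br W U) V = 0)"

definition form_kernel :: "('a \<Rightarrow> 'a \<Rightarrow> real) \<Rightarrow> 'a set" where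
  "form_kernel \<omega> = {W. \<forall>V. \<omega> W V = 0}"

definition lie_subalgebra :: "('a::real_vector \<Rightarrow> 'a \<Rightarrow> 'a) \<Rightarrow> 'a set \<Rightarrow> bool" where
  "lie_subalgebra br S \<longleftrightarrow> subspace S \<and> (\<forall>x\<in>S. \<forall>y\<in>S. br x y \<in> S)"

definition abelian_subalgebra :: "('a::real_vector \<Rightarrow> 'a \<Rightarrow> 'a) \<Rightarrow> 'a set \<Rightarrow> bool" where
  "abelian_subalgebra br S \<longleftrightarrow> lie_subalgebra br S \<and> (\<forall>x\<in>S. \<forall>y\<in>S. br x y = 0)"

definition skew_symmetric_map :: "('a::real_inner \<Rightarrow> 'a) \<Rightarrow> bool" where
  "skew_symmetric_map F \<longleftrightarrow> linear F \<and> (\<forall>x y. inner (F x) y = - inner x (F y))"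

definition orth_compl :: "'a::real_inner set \<Rightarrow> 'a set" where
  "orth_compl S = {x. \<forall>y\<in>S. inner x y = 0}"

end

theory Submission
  imports Defs
begin

lemma bil_facts:
  assumes "bilinear (f :: 'a::real_vector \<Rightarrow> 'a \<Rightarrow> real)"
  shows "f (x + y) z = f x z + f y z" "f z (x + y) = f z x + f z y"
        "f (c *\<^sub>R x) z = c * f x z" "f z (c *\<^sub>R x) = c * f z x"
        "f 0 z = 0" "f z 0 = 0"
proof -
  have l1: "linear (\<lambda>x. f x z)" and l2: "linear (f z)" using assms unfolding bilinear_def by auto
  show "f (x + y) z = f x z + f y z" using linear_add[OF l1] by simp
  show "f z (x + y) = f z x + f z y" using linear_add[OF l2] by simp
  show "f (c *\<^sub>R x) z = c * f x z" using linear_scale[OF l1] by simp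
  show "f z (c *\<^sub>R x) = c * f z x" using linear_scale[OF l2] by simp
  show "f 0 z = 0" using linear_0[OF l1] by simp
  show "f z 0 = 0" using linear_0[OF l2] by simp
qed

lemma part1:
  fixes br :: "'a::euclidean_space \<Rightarrow> 'a \<Rightarrow> 'a"
  assumes nil: "two_step_nilpotent br" and tf: "two_form \<omega>" and cl: "closed_form br \<omega>"
    and kz: "form_kernel \<omega> \<inter> lie_center br = {0}"
  shows "abelian_subalgebra br (form_kernel \<omega>)"
proof -
  have bil: "bilinear \<omega>" and alt: "\<And>x. \<omega> x x = 0" using tf by (auto simp: two_form_def)
  note bf = bil_facts[OF bil]
  have anti: "\<omega> x y = - \<omega> y x" for x y
  proof -
    have "\<omega> (x + y) (x + y) = 0" by (rule alt)
    then have "\<omega> x x + \<omega> x y + (\<omega> y x + \<omega> y y) = 0" by (simp add: bf)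
    then show ?thesis by (simp add: alt)
  qed
  have sub: "subspace (form_kernel \<omega>)"
    unfolding subspace_def form_kernel_def by (auto simp: bf)
  have br0: "br U V = 0" if U: "U \<in> form_kernel \<omega>" and V: "V \<in> form_kernel \<omega>" for U V
  proof -
    have "br U V \<in> form_kernel \<omega>"
      unfolding form_kernel_def
    proof (intro CollectI allI)
      fix W
      have "\<omega> (br U V) W + \<omega> (br V W) U + \<omega> (br W U) V = 0"
        using cl by (simp add: closed_form_def)
      moreover have "\<omega> (br V W) U = 0" using U anti[of "br V W" U]
        by (simp add: form_kernel_def)
      moreover have "\<omega> (br W U) V = 0" using V anti[of "br W U" V]
        by (simp add: form_kernel_def)
      ultimately show "\<omega> (br U V) W = 0" by simp
    qed
    moreover have "br U V \<in> lie_center br"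
      using nil by (simp add: two_step_nilpotent_def lie_center_def)
    ultimately show ?thesis using kz by blast
  qed
  have "0 \<in> form_kernel \<omega>" using sub by (simp add: subspace_0)
  then show ?thesis using sub br0
    by (auto simp: abelian_subalgebra_def lie_subalgebra_def)
qed

theorem mainTheorem4:
  fixes br :: "'a::euclidean_space \<Rightarrow> 'a \<Rightarrow> 'a"
  assumes nil: "two_step_nilpotent br"
  shows "(\<forall>\<omega>. two_form \<omega> \<and> closed_form br \<omega> \<and> form_kernel \<omega> \<inter> lie_center br = {0}
            \<longrightarrow> abelian_subalgebra br (form_kernel \<omega>))
       \<and> (\<forall>F. skew_symmetric_map F
            \<and> F ` orth_compl (lie_center br) \<subseteq> lie_center br
            \<and> F ` lie_center br \<subseteq> orth_compl (lie_center br)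
            \<and> closed_form br (\<lambda>X Y. inner (F X) Y)
            \<and> F ` orth_compl (lie_center br) = lie_center br
            \<longrightarrow> abelian_subalgebra br {X \<in> orth_compl (lie_center br). F X = 0})"
proof (intro conjI allI impI)
  fix \<omega> :: "'a \<Rightarrow> 'a \<Rightarrow> real"
  assume "two_form \<omega> \<and> closed_form br \<omega> \<and> form_kernel \<omega> \<inter> lie_center br = {0}"
  then show "abelian_subalgebra br (form_kernel \<omega>)" using part1[OF nil] by blast
next
  fix F :: "'a \<Rightarrow> 'a"
  let ?z = "lie_center br" and ?v = "orth_compl (lie_center br)"
  assume H: "skew_symmetric_map F \<and> F ` ?v \<subseteq> ?z \<and> F ` ?z \<subseteq> ?v
            \<and> closed_form br (\<lambda>X Y. inner (F X) Y) \<and> F ` ?v = ?z"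
  have lin: "linear F" and sk: "\<And>x y. inner (F x) y = - inner x (F y)"
    using H by (auto simp: skew_symmetric_map_def)
  define \<omega> where "\<omega> = (\<lambda>X Y. inner (F X) Y)"
  have tf: "two_form \<omega>"
    unfolding two_form_def \<omega>_def
  proof
    show "bilinear (\<lambda>X Y. inner (F X) Y)"
      unfolding bilinear_def using lin
      by (auto intro!: linearI simp: linear_add linear_scale inner_add_left inner_add_right)
    show "\<forall>x. inner (F x) x = 0"
      using sk by (metis inner_commute add.inverse_unique add_eq_0_iff2 neg_equal_zero)
  qed
  have kerF: "form_kernel \<omega> = {X. F X = 0}"
    unfolding form_kernel_def \<omega>_def
  proof (intro set_eqI iffI)
    fix W assume "W \<in> {W. \<forall>V. inner (F W) V = 0}"
    then have "inner (F W) (F W) = 0" by blast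
    then show "W \<in> {X. F X = 0}" by simp
  qed auto
  have kz: "form_kernel \<omega> \<inter> ?z = {0}"
  proof
    show "form_kernel \<omega> \<inter> ?z \<subseteq> {0}"
    proof
      fix Z assume Z: "Z \<in> form_kernel \<omega> \<inter> ?z"
      then have FZ: "F Z = 0" using kerF by auto
      have "Z \<in> F ` ?v" using Z H by auto
      then obtain X where "Z = F X" by auto
      then have "inner Z Z = - inner X (F Z)" using sk by simp
      then show "Z \<in> {0}" using FZ by simp
    qed
    have "linear (\<lambda>x. br x V)" for V
      using nil by (simp add: two_step_nilpotent_def lie_algebra_def bilinear_def)
    then have "br 0 V = 0" for V using linear_0 by blast
    then show "{0} \<subseteq> form_kernel \<omega> \<inter> ?z"
      using lin by (auto simp: kerF lie_center_def linear_0 nil[unfolded two_step_nilpotent_def lie_algebra_def] bilinear_def)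
  qed
  have cl: "closed_form br \<omega>" using H by (simp add: \<omega>_def)
  have A: "abelian_subalgebra br {X. F X = 0}" using part1[OF nil tf cl kz] kerF by simp
  have subv: "subspace ?v"
    unfolding subspace_def orth_compl_def by (auto simp: inner_add_left)
  have subS: "subspace {X \<in> ?v. F X = 0}"
    using subv lin linear_0[OF lin] unfolding subspace_def by (auto simp: linear_add linear_scale)
  show "abelian_subalgebra br {X \<in> ?v. F X = 0}"
    using A subS subspace_0[OF subS]
    by (auto simp: abelian_subalgebra_def lie_subalgebra_def)
qed

end
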